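(* Let $(X,\le,\to,\rightsquigarrow,0,1)$ be a bounded sup-commutative pseudo BCK-algebra and let $(\exists,\forall)$ be a pair of strong synchronized maps on $X$ such that $\exists$ is a weak existential quantifier (equivalently, $\forall$ is a weak universal quantifier). Then $\forall(x\wedge y)=\forall x\wedge\forall y$ and $\exists(x\vee y)=\exists x\vee\exists y$ for all $x,y\in X$.
   Context: A quantum B-algebra is a partially ordered set $(X,\le)$ with two binary operations $\to$ and $\rightsquigarrow$ such that for all $x,y,z\in X$: $y\to z\le (x\to y)\to(x\to z)$; $y\rightsquigarrow z\le (x\rightsquigarrow y)\to(x\rightsquigarrow z)$; $y\le z$ implies $x\to y\le x\to z$; and $x\le y\to z$ iff $y\le x\rightsquigarrow z$. A bounded pseudo BCK-algebra $(X,\le,\to,\rightsquigarrow,0,1)$ is a quantum B-algebra with a greatest element $1$ satisfying $1\to x=1\rightsquigarrow x=x$ and a least element $0$; then $x\le y$ iff $x\to y=1$ iff $x\rightsquigarrow y=1$. It is sup-commutative if $(x\to y)\rightsquigarrow y=(y\to x)\rightsquigarrow x$ and $(x\rightsquigarrow y)\to y=(y\rightsquigarrow x)\to x$ for all $x,y$. Write $x^{-}=x\to 0$, $x^{\sim}=x\rightsquigarrow 0$; a bounded sup-commutative pseudo BCK-algebra satisfies $(x^{-})^{\sim}=(x^{\sim})^{-}=x$, and $(X,\le)$ is a lattice with $x\vee y=(x\to y)\rightsquigarrow y=(x\rightsquigarrow y)\to y$ and $x\wedge y=(x^{-}\vee y^{-})^{\sim}=(x^{\sim}\vee y^{\sim})^{-}$.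 Define $x\odot y=(x\to y^{-})^{\sim}$ and $x\oplus y=y^{\sim}\to x$ $(=x^{-}\rightsquigarrow y)$. A map $\tau:X\to X$ is good if $(\tau(x^{-}))^{\sim}=(\tau(x^{\sim}))^{-}$ for all $x$; good maps $\tau,\sigma$ are synchronized if $\sigma(x)=(\tau(x^{-}))^{\sim}=(\tau(x^{\sim}))^{-}$ for all $x$; strong synchronized if moreover $\tau\circ\sigma=\sigma$ (equivalently $\sigma\circ\tau=\tau$). A good map $\exists$ is a weak existential quantifier if for all $x,y$: $\exists 0=0$; $\exists 1=1$; $x\le\exists x$; $\exists(x\oplus\exists y)=\exists(\exists x\oplus y)=\exists x\oplus\exists y$; $\exists(x\oplus x)=\exists x\oplus\exists x$; $\exists(x\odot\exists y)=\exists(\exists x\odot y)=\exists x\odot\exists y$. A good map $\forall$ is a weak universal quantifier if for all $x,y$: $\forall 1=1$; $\forall 0=0$; $\forall x\le x$; $\forall(x\odot\forall y)=\forall(\forall x\odot y)=\forall x\odot\forall y$; $\forall(x\odot x)=\forall x\odot\forall x$; $\forall(x\oplus\forall y)=\forall(\forall x\oplus y)=\forall x\oplus\forall y$. *)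

theory Defs
  imports Main
begin

text \<open>A quantum B-algebra on the whole type 'a, with partial order le,
  arrows imp (\<rightarrow>) and imp2 (the squiggly arrow).\<close>
definition quantum_B_algebra ::
  "('a \<Rightarrow> 'a \<Rightarrow> bool) \<Rightarrow> ('a \<Rightarrow> 'a \<Rightarrow> 'a) \<Rightarrow> ('a \<Rightarrow> 'a \<Rightarrow> 'a) \<Rightarrow> bool" where
  "quantum_B_algebra le imp imp2 \<longleftrightarrow>
     (\<forall>x. le x x) \<and>
     (\<forall>x y. le x y \<and> le y x \<longrightarrow> x = y) \<and>
     (\<forall>x y z. le x y \<and> le y z \<longrightarrow> le x z) \<and>
     (\<forall>x y z. le (imp y z) (imp (imp x y) (imp x z))) \<and>
     (\<forall>x y z. le (imp2 y z) (imp (imp2 x y) (imp2 x z))) \<and>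
     (\<forall>x y z. le y z \<longrightarrow> le (imp x y) (imp x z)) \<and>
     (\<forall>x y z. le x (imp y z) \<longleftrightarrow> le y (imp2 x z))"

definition bounded_pseudo_BCK ::
  "('a \<Rightarrow> 'a \<Rightarrow> bool) \<Rightarrow> ('a \<Rightarrow> 'a \<Rightarrow> 'a) \<Rightarrow> ('a \<Rightarrow> 'a \<Rightarrow> 'a) \<Rightarrow> 'a \<Rightarrow> 'a \<Rightarrow> bool" where
  "bounded_pseudo_BCK le imp imp2 zero one \<longleftrightarrow>
     quantum_B_algebra le imp imp2 \<and>
     (\<forall>x. le x one) \<and> (\<forall>x. imp one x = x \<and> imp2 one x = x) \<and>
     (\<forall>x. le zero x)"

definition sup_commutative ::
  "('a \<Rightarrow> 'a \<Rightarrow> 'a) \<Rightarrow> ('a \<Rightarrow> 'a \<Rightarrow> 'a) \<Rightarrow> bool" where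
  "sup_commutative imp imp2 \<longleftrightarrow>
     (\<forall>x y. imp2 (imp x y) y = imp2 (imp y x) x \<and>
            imp (imp2 x y) y = imp (imp2 y x) x)"

definition neg1 :: "('a \<Rightarrow> 'a \<Rightarrow> 'a) \<Rightarrow> 'a \<Rightarrow> 'a \<Rightarrow> 'a" where
  "neg1 imp zero x = imp x zero"

definition neg2 :: "('a \<Rightarrow> 'a \<Rightarrow> 'a) \<Rightarrow> 'a \<Rightarrow> 'a \<Rightarrow> 'a" where
  "neg2 imp2 zero x = imp2 x zero"

definition bsup :: "('a \<Rightarrow> 'a \<Rightarrow> 'a) \<Rightarrow> ('a \<Rightarrow> 'a \<Rightarrow> 'a) \<Rightarrow> 'a \<Rightarrow> 'a \<Rightarrow> 'a" where
  "bsup imp imp2 x y = imp2 (imp x y) y"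

definition binf :: "('a \<Rightarrow> 'a \<Rightarrow> 'a) \<Rightarrow> ('a \<Rightarrow> 'a \<Rightarrow> 'a) \<Rightarrow> 'a \<Rightarrow> 'a \<Rightarrow> 'a \<Rightarrow> 'a" where
  "binf imp imp2 zero x y =
     neg2 imp2 zero (bsup imp imp2 (neg1 imp zero x) (neg1 imp zero y))"

definition bodot :: "('a \<Rightarrow> 'a \<Rightarrow> 'a) \<Rightarrow> ('a \<Rightarrow> 'a \<Rightarrow> 'a) \<Rightarrow> 'a \<Rightarrow> 'a \<Rightarrow> 'a \<Rightarrow> 'a" where
  "bodot imp imp2 zero x y = neg2 imp2 zero (imp x (neg1 imp zero y))"

definition boplus :: "('a \<Rightarrow> 'a \<Rightarrow> 'a) \<Rightarrow> ('a \<Rightarrow> 'a \<Rightarrow> 'a) \<Rightarrow> 'a \<Rightarrow> 'a \<Rightarrow> 'a \<Rightarrow> 'a" where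
  "boplus imp imp2 zero x y = imp (neg2 imp2 zero y) x"

definition good_map :: "('a \<Rightarrow> 'a \<Rightarrow> 'a) \<Rightarrow> ('a \<Rightarrow> 'a \<Rightarrow> 'a) \<Rightarrow> 'a \<Rightarrow> ('a \<Rightarrow> 'a) \<Rightarrow> bool" where
  "good_map imp imp2 zero t \<longleftrightarrow>
     (\<forall>x. neg2 imp2 zero (t (neg1 imp zero x)) = neg1 imp zero (t (neg2 imp2 zero x)))"

definition synchronized ::
  "('a \<Rightarrow> 'a \<Rightarrow> 'a) \<Rightarrow> ('a \<Rightarrow> 'a \<Rightarrow> 'a) \<Rightarrow> 'a \<Rightarrow> ('a \<Rightarrow> 'a) \<Rightarrow> ('a \<Rightarrow> 'a) \<Rightarrow> bool" where
  "synchronized imp imp2 zero \<tau> \<sigma> \<longleftrightarrow>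
     good_map imp imp2 zero \<tau> \<and> good_map imp imp2 zero \<sigma> \<and>
     (\<forall>x. \<sigma> x = neg2 imp2 zero (\<tau> (neg1 imp zero x)) \<and>
          \<sigma> x = neg1 imp zero (\<tau> (neg2 imp2 zero x)))"

definition strong_synchronized ::
  "('a \<Rightarrow> 'a \<Rightarrow> 'a) \<Rightarrow> ('a \<Rightarrow> 'a \<Rightarrow> 'a) \<Rightarrow> 'a \<Rightarrow> ('a \<Rightarrow> 'a) \<Rightarrow> ('a \<Rightarrow> 'a) \<Rightarrow> bool" where
  "strong_synchronized imp imp2 zero \<tau> \<sigma> \<longleftrightarrow>
     synchronized imp imp2 zero \<tau> \<sigma> \<and> \<tau> \<circ> \<sigma> = \<sigma>"

definition weak_existential ::
  "('a \<Rightarrow> 'a \<Rightarrow> bool) \<Rightarrow> ('a \<Rightarrow> 'a \<Rightarrow> 'a) \<Rightarrow> ('a \<Rightarrow> 'a \<Rightarrow> 'a) \<Rightarrow> 'a \<Rightarrow> 'a \<Rightarrow> ('a \<Rightarrow> 'a) \<Rightarrow> bool" where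
  "weak_existential le imp imp2 zero one E \<longleftrightarrow>
     good_map imp imp2 zero E \<and> E zero = zero \<and> E one = one \<and>
     (\<forall>x. le x (E x)) \<and>
     (\<forall>x y. E (boplus imp imp2 zero x (E y)) = boplus imp imp2 zero (E x) (E y) \<and>
            E (boplus imp imp2 zero (E x) y) = boplus imp imp2 zero (E x) (E y)) \<and>
     (\<forall>x. E (boplus imp imp2 zero x x) = boplus imp imp2 zero (E x) (E x)) \<and>
     (\<forall>x y. E (bodot imp imp2 zero x (E y)) = bodot imp imp2 zero (E x) (E y) \<and>
            E (bodot imp imp2 zero (E x) y) = bodot imp imp2 zero (E x) (E y))"

end

theory Submission
  imports Defs
begin

lemma imp_eq_imp2:
  assumes "bounded_pseudo_BCK le imp imp2 zero one"
  shows "imp2 = imp"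
proof -
  from assms have Q: "quantum_B_algebra le imp imp2" and t: "\<And>x. imp one x = x \<and> imp2 one x = x"
    by (auto simp: bounded_pseudo_BCK_def)
  from Q have an: "\<And>x y. le x y \<Longrightarrow> le y x \<Longrightarrow> x = y"
    and tr: "\<And>x y z. le x y \<Longrightarrow> le y z \<Longrightarrow> le x z"
    and rf: "\<And>x. le x x"
    and b: "\<And>x y z. le (imp2 y z) (imp (imp2 x y) (imp2 x z))"
    and d: "\<And>x y z. le x (imp y z) \<longleftrightarrow> le y (imp2 x z)"
    unfolding quantum_B_algebra_def by blast+
  have s1: "le (imp2 y z) (imp y z)" for y z using b[of y z one] t by simp
  have s2: "le (imp x z) (imp2 x z)" for x z
  proof -
    have "le x (imp2 (imp x z) z)" using d[of "imp x z" x z] rf by simp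
    moreover have "le (imp2 (imp x z) z) (imp (imp x z) z)" using s1 .
    ultimately have "le x (imp (imp x z) z)" by (rule tr)
    thus ?thesis using d by blast
  qed
  show ?thesis using an s1 s2 by (intro ext) blast
qed

locale cbck =
  fixes le :: "'a \<Rightarrow> 'a \<Rightarrow> bool" and imp :: "'a \<Rightarrow> 'a \<Rightarrow> 'a" and zero one :: 'a
    and E A :: "'a \<Rightarrow> 'a"
  assumes an: "\<And>x y. le x y \<Longrightarrow> le y x \<Longrightarrow> x = y"
    and tr: "\<And>x y z. le x y \<Longrightarrow> le y z \<Longrightarrow> le x z"
    and rf: "\<And>x. le x x"
    and d: "\<And>x y z. le x (imp y z) \<longleftrightarrow> le y (imp x z)"
    and top: "\<And>x. le x one"
    and one_imp: "\<And>x. imp one x = x"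
    and bot: "\<And>x. le zero x"
    and sc: "\<And>x y. imp (imp x y) y = imp (imp y x) x"
    and Adef: "\<And>x. A x = imp (E (imp x zero)) zero"
    and EA: "\<And>x. E (A x) = A x"
    and E0: "E zero = zero"
    and ext: "\<And>x. le x (E x)"
    and Eplus: "\<And>x y. E (imp (imp (E y) zero) x) = imp (imp (E y) zero) (E x)"
    and Eplus2: "\<And>x y. E (imp (imp y zero) (E x)) = imp (imp (E y) zero) (E x)"
    and Edot: "\<And>x y. E (imp (imp x (imp (E y) zero)) zero) = imp (imp (E x) (imp (E y) zero)) zero"
begin

lemma le_iff: "le x y \<longleftrightarrow> imp x y = one"
proof
  assume "le x y"
  hence "le x (imp one y)" by (simp add: one_imp)
  hence "le one (imp x y)" using d by blast
  thus "imp x y = one" using an top by blast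
next
  assume "imp x y = one"
  hence "le one (imp x y)" by (simp add: rf)
  hence "le x (imp one y)" using d by blast
  thus "le x y" by (simp add: one_imp)
qed

lemma imp_self: "imp x x = one" using le_iff rf by blast

lemma zero_imp: "imp zero x = one" using le_iff bot by blast

lemma nn: "imp (imp x zero) zero = x"
  using sc[of x zero] by (simp add: zero_imp one_imp)

lemma fixE: "E (E y) = E y"
  using Eplus[where x=zero and y=y] by (simp add: E0 nn)

lemma fix_neg: "E (imp (E z) zero) = imp (E z) zero"
proof -
  have "A (imp z zero) = imp (E z) zero" by (simp add: Adef nn)
  thus ?thesis using EA[of "imp z zero"] by simp
qed

lemma fix_imp:
  assumes "E a = a" "E b = b"
  shows "E (imp a b) = imp a b"
proof -
  have "imp a b = imp (imp (E (imp a zero)) zero) (E b)"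
    using assms fix_neg[of a] by (simp add: nn)
  hence "E (imp a b) = imp (imp (E (imp a zero)) zero) (E b)"
    using Eplus[where x=b and y="imp a zero"] assms by (metis fixE)
  thus ?thesis using assms fix_neg[of a] by (simp add: nn)
qed

lemma mono_E:
  assumes "le x (E y)" shows "le (E x) (E y)"
proof -
  have "imp x (E y) = one" using assms le_iff by blast
  hence "imp (imp x (imp (E (imp (E y) zero)) zero)) zero = zero"
    by (simp add: fix_neg nn one_imp)
  hence "E (imp (imp x (imp (E (imp (E y) zero)) zero)) zero) = zero" by (simp add: E0)
  hence "imp (imp (E x) (imp (E (imp (E y) zero)) zero)) zero = zero" by (simp add: Edot)
  hence "imp (E x) (E y) = one" by (metis fix_neg nn one_imp zero_imp)
  thus ?thesis using le_iff by blast
qed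

lemma antitone: "le u v \<Longrightarrow> le (imp v c) (imp u c)"
proof -
  assume "le u v"
  moreover have "le v (imp (imp v c) c)" using d rf by blast
  ultimately have "le u (imp (imp v c) c)" by (rule tr)
  thus ?thesis using d by blast
qed

lemma ub1: "le x (imp (imp x y) y)" using d rf by blast
lemma ub2: "le y (imp (imp x y) y)"
proof -
  have "le (imp x y) (imp y y)" by (simp add: imp_self top)
  thus ?thesis using d by blast
qed

lemma lub: "le x z \<Longrightarrow> le y z \<Longrightarrow> le (imp (imp x y) y) z"
proof -
  assume "le x z" "le y z"
  hence "le (imp z y) (imp x y)" by (intro antitone) simp
  hence "le (imp (imp x y) y) (imp (imp z y) y)" by (rule antitone)
  also have "imp (imp z y) y = z" using sc[of z y] \<open>le y z\<close> le_iff one_imp by simp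
  finally show ?thesis .
qed

lemma E_sup: "E (imp (imp x y) y) = imp (imp (E x) (E y)) (E y)"
proof (rule an)
  let ?c = "imp (imp (E x) (E y)) (E y)"
  have fc: "E ?c = ?c" by (simp add: fix_imp fixE)
  have "le (imp (imp x y) y) ?c"
    by (rule lub; rule tr[OF ext]; simp add: ub1 ub2)
  hence "le (imp (imp x y) y) (E ?c)" using fc by simp
  hence "le (E (imp (imp x y) y)) (E ?c)" by (rule mono_E)
  thus "le (E (imp (imp x y) y)) ?c" using fc by simp
  have "le (E x) (E (imp (imp x y) y))" by (rule mono_E, rule tr[OF ub1 ext])
  moreover have "le (E y) (E (imp (imp x y) y))" by (rule mono_E, rule tr[OF ub2 ext])
  ultimately show "le ?c (E (imp (imp x y) y))" by (rule lub)
qed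

end

theorem lemma6p4:
  fixes le :: "'a \<Rightarrow> 'a \<Rightarrow> bool"
    and imp imp2 :: "'a \<Rightarrow> 'a \<Rightarrow> 'a"
    and zero one :: 'a
    and E A :: "'a \<Rightarrow> 'a"
  assumes "bounded_pseudo_BCK le imp imp2 zero one"
    and "sup_commutative imp imp2"
    and "strong_synchronized imp imp2 zero E A"
    and "weak_existential le imp imp2 zero one E"
  shows "\<forall>x y. A (binf imp imp2 zero x y) = binf imp imp2 zero (A x) (A y) \<and>
               E (bsup imp imp2 x y) = bsup imp imp2 (E x) (E y)"
proof -
  have ii: "imp2 = imp" by (rule imp_eq_imp2[OF assms(1)])
  from assms(1) have Q: "quantum_B_algebra le imp imp"
    and bd: "(\<forall>x. le x one) \<and> (\<forall>x. imp one x = x) \<and> (\<forall>x. le zero x)"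
    unfolding ii bounded_pseudo_BCK_def by auto
  have f1: "\<And>x y. le x y \<Longrightarrow> le y x \<Longrightarrow> x = y" using Q unfolding quantum_B_algebra_def by blast
  have f2: "\<And>x y z. le x y \<Longrightarrow> le y z \<Longrightarrow> le x z" using Q unfolding quantum_B_algebra_def by blast
  have f3: "\<And>x. le x x" using Q unfolding quantum_B_algebra_def by blast
  have f4: "\<And>x y z. le x (imp y z) \<longleftrightarrow> le y (imp x z)" using Q unfolding quantum_B_algebra_def by blast
  have f5: "\<And>x. le x one" "\<And>x. imp one x = x" "\<And>x. le zero x" using bd by auto
  have f6: "\<And>x y. imp (imp x y) y = imp (imp y x) x" using assms(2) ii by (simp add: sup_commutative_def)
  have f7: "\<And>x. A x = imp (E (imp x zero)) zero" "\<And>x. E (A x) = A x"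
    using assms(3) ii by (auto simp: strong_synchronized_def synchronized_def neg1_def neg2_def fun_eq_iff)
  have f8: "E zero = zero" "\<And>x. le x (E x)"
      "\<And>x y. E (imp (imp (E y) zero) x) = imp (imp (E y) zero) (E x)"
      "\<And>x y. E (imp (imp y zero) (E x)) = imp (imp (E y) zero) (E x)"
      "\<And>x y. E (imp (imp x (imp (E y) zero)) zero) = imp (imp (E x) (imp (E y) zero)) zero"
      using assms(4) ii by (auto simp: weak_existential_def boplus_def bodot_def neg1_def neg2_def)
  interpret cbck le imp zero one E A
    by (rule cbck.intro[OF f1 f2 f3 f4 f5 f6 f7 f8])
  show ?thesis
    by (simp add: ii binf_def bsup_def neg1_def neg2_def E_sup Adef nn)
qed

end
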